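(* For any simplicial model $\mathcal{C}$, $\mathcal{C}$ is isomorphic to $\mathtt{SC}(\mathtt{LEM}(\mathcal{C}))$; and for any local epistemic model $\mathcal{M}$, $\mathcal{M}^{pr}$ is isomorphic to $\mathtt{LEM}(\mathtt{SC}(\mathcal{M}))$ (so for any proper local epistemic model $\mathcal{M}$, $\mathcal{M}$ is isomorphic to $\mathtt{LEM}(\mathtt{SC}(\mathcal{M}))$).
   Context: Fix a nonempty finite set $\mathbf{A}$ of agents and a countable set $\mathbf{P}$ of predicate letters. A simplicial model is $\mathcal{C}=(\mathcal{V},C,\chi,\ell)$: $\mathcal{V}\neq\emptyset$; $C\subseteq\wp(\mathcal{V})$ with $\emptyset\notin C$, closed under nonempty subsets, containing all singletons; $\chi:\mathcal{V}\to\mathbf{A}$ injective on every member of $C$; $\ell:\mathbf{P}\to\wp(\mathcal{V})$; facets $\mathcal{F}(C)$ are the inclusion-maximal members of $C$. A first-order Kripke model is $\mathcal{M}=(W,\delta,\{R_a\}_{a\in\mathbf{A}},\rho)$: $W\neq\emptyset$, $\delta:W\to\wp(\mathbf{A})\setminus\{\emptyset\}$, $R_a\subseteq W\times W$ with $R_a(w)=\emptyset$ if $a\notin\delta(w)$, $\rho:\mathbf{P}\times W\to\wp(\mathbf{A})$ with $\rho(p,w)\subseteq\delta(w)$. $\mathcal{M}$ is a local epistemic model if: for each $a$ the restriction of $R_a$ to $\{w\mid a\in\delta(w)\}$ is an equivalence relation; $wR_av$ and $a\in\delta(w)$ imply $a\in\delta(v)$; $wR_av$ and $a\in\rho(p,w)$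 imply $a\in\rho(p,v)$; $v\in\bigcap_{a\in\delta(w)}R_a(w)$ implies $\delta(v)\subseteq\delta(w)$. It is proper if additionally $\bigcap_{a\in\delta(w)}R_a(w)=\{w\}$ for all $w$. Properization: with $[w]_\delta=\bigcap_{a\in\delta(w)}R_a(w)$, $\mathcal{M}^{pr}$ has worlds $\{[w]_\delta\mid w\in W\}$, $\delta^{pr}([w]_\delta)=\delta(w)$, $R^{pr}_a=\{([w]_\delta,[v]_\delta)\mid wR_av\}$, $\rho^{pr}(p,[w]_\delta)=\rho(p,w)$. $\mathtt{LEM}(\mathcal{C})$ has worlds $\mathcal{F}(C)$, $\delta(F)=\chi[F]$, $R_a=\{(F,G)\mid a\in\chi[F\cap G]\}$, $\rho(p,F)=\chi[F\cap\ell(p)]$. For a local epistemic model $\mathcal{M}$, let $[w]_a=R_a(w)$ and $F^{\mathcal M}_w=\{(a,[w]_a)\mid a\in\delta(w)\}$; $\mathtt{SC}(\mathcal{M})$ has vertices $\{(a,[w]_a)\mid w\in W,a\in\delta(w)\}$, faces the nonempty subsets of the sets $F^{\mathcal M}_w$ ($w\in W$), coloring $(a,[w]_a)\mapsto a$, and labeling $\ell(p)=\{(a,[w]_a)\mid a\in\rho(p,w)\}$. An isomorphism of simplicial models $\mathcal{C}\to\mathcal{D}$ is a bijection $g:\mathcal{V}^{\mathcal C}\to\mathcal{V}^{\mathcal D}$ with $X\in C^{\mathcal C}\iff g[X]\in C^{\mathcal D}$, $\chi^{\mathcal D}\circ g=\chi^{\mathcal C}$, and $g[\ell^{\mathcal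 C}(p)]=\ell^{\mathcal D}(p)$ for all $p$. An isomorphism of Kripke models is a bijection $f$ of worlds preserving $\delta$ and $\rho$ (i.e. $\delta'(f(w))=\delta(w)$, $\rho'(p,f(w))=\rho(p,w)$) with $wR_av\iff f(w)R'_af(v)$. *)

theory Defs
  imports Main "HOL-Library.Countable"
begin

record ('v, 'a, 'p) smodel =
  sm_verts :: "'v set"
  sm_faces :: "'v set set"
  sm_col   :: "'v \<Rightarrow> 'a"
  sm_lab   :: "'p \<Rightarrow> 'v set"

definition simplicial_model :: "('v, 'a, 'p) smodel \<Rightarrow> bool" where
  "simplicial_model C \<longleftrightarrow>
     sm_verts C \<noteq> {} \<and>
     sm_faces C \<subseteq> Pow (sm_verts C) \<and>
     {} \<notin> sm_faces C \<and>
     (\<forall>X\<in>sm_faces C. \<forall>Y. Y \<subseteq> X \<and> Y \<noteq> {} \<longrightarrow> Y \<in> sm_faces C) \<and>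
     (\<forall>v\<in>sm_verts C. {v} \<in> sm_faces C) \<and>
     (\<forall>X\<in>sm_faces C. inj_on (sm_col C) X) \<and>
     (\<forall>p. sm_lab C p \<subseteq> sm_verts C)"

definition facets :: "('v, 'a, 'p) smodel \<Rightarrow> 'v set set" where
  "facets C = {X \<in> sm_faces C. \<forall>Y\<in>sm_faces C. X \<subseteq> Y \<longrightarrow> X = Y}"

(* First-order Kripke models: worlds W, delta, relations R_a, valuation rho *)
record ('w, 'a, 'p) kmodel =
  km_worlds :: "'w set"
  km_dom    :: "'w \<Rightarrow> 'a set"
  km_rel    :: "'a \<Rightarrow> ('w \<times> 'w) set"
  km_val    :: "'p \<Rightarrow> 'w \<Rightarrow> 'a set"

definition kripke_model :: "('w, 'a, 'p) kmodel \<Rightarrow> bool" where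
  "kripke_model M \<longleftrightarrow>
     km_worlds M \<noteq> {} \<and>
     (\<forall>w\<in>km_worlds M. km_dom M w \<noteq> {}) \<and>
     (\<forall>a. km_rel M a \<subseteq> km_worlds M \<times> km_worlds M) \<and>
     (\<forall>a. \<forall>w\<in>km_worlds M. a \<notin> km_dom M w \<longrightarrow> km_rel M a `` {w} = {}) \<and>
     (\<forall>p. \<forall>w\<in>km_worlds M. km_val M p w \<subseteq> km_dom M w)"

definition dcls :: "('w, 'a, 'p) kmodel \<Rightarrow> 'w \<Rightarrow> 'w set" where
  "dcls M w = (\<Inter>a\<in>km_dom M w. km_rel M a `` {w})"

definition local_epistemic :: "('w, 'a, 'p) kmodel \<Rightarrow> bool" where
  "local_epistemic M \<longleftrightarrow>
     kripke_model M \<and>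
     (\<forall>a. let S = {w \<in> km_worlds M. a \<in> km_dom M w} in equiv S (km_rel M a \<inter> S \<times> S)) \<and>
     (\<forall>a w v. (w, v) \<in> km_rel M a \<and> a \<in> km_dom M w \<longrightarrow> a \<in> km_dom M v) \<and>
     (\<forall>a p w v. (w, v) \<in> km_rel M a \<and> a \<in> km_val M p w \<longrightarrow> a \<in> km_val M p v) \<and>
     (\<forall>w\<in>km_worlds M. \<forall>v\<in>dcls M w. km_dom M v \<subseteq> km_dom M w)"

definition proper :: "('w, 'a, 'p) kmodel \<Rightarrow> bool" where
  "proper M \<longleftrightarrow> local_epistemic M \<and> (\<forall>w\<in>km_worlds M. dcls M w = {w})"

(* Properization; delta and rho on a class are taken at a chosen representative
   (well defined for local epistemic models) *)
definition properize :: "('w, 'a, 'p) kmodel \<Rightarrow> ('w set, 'a, 'p) kmodel" where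
  "properize M =
     \<lparr> km_worlds = dcls M ` km_worlds M,
       km_dom = (\<lambda>X. km_dom M (SOME w. w \<in> km_worlds M \<and> dcls M w = X)),
       km_rel = (\<lambda>a. {(dcls M w, dcls M v) | w v. (w, v) \<in> km_rel M a}),
       km_val = (\<lambda>p X. km_val M p (SOME w. w \<in> km_worlds M \<and> dcls M w = X)) \<rparr>"

definition LEM :: "('v, 'a, 'p) smodel \<Rightarrow> ('v set, 'a, 'p) kmodel" where
  "LEM C =
     \<lparr> km_worlds = facets C,
       km_dom = (\<lambda>F. sm_col C ` F),
       km_rel = (\<lambda>a. {(F, G). F \<in> facets C \<and> G \<in> facets C \<and> a \<in> sm_col C ` (F \<inter> G)}),
       km_val = (\<lambda>p F. sm_col C ` (F \<inter> sm_lab C p)) \<rparr>"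

definition Fw :: "('w, 'a, 'p) kmodel \<Rightarrow> 'w \<Rightarrow> ('a \<times> 'w set) set" where
  "Fw M w = {(a, km_rel M a `` {w}) | a. a \<in> km_dom M w}"

definition SC :: "('w, 'a, 'p) kmodel \<Rightarrow> ('a \<times> 'w set, 'a, 'p) smodel" where
  "SC M =
     \<lparr> sm_verts = {(a, km_rel M a `` {w}) | w a. w \<in> km_worlds M \<and> a \<in> km_dom M w},
       sm_faces = {X. X \<noteq> {} \<and> (\<exists>w\<in>km_worlds M. X \<subseteq> Fw M w)},
       sm_col = fst,
       sm_lab = (\<lambda>p. {(a, km_rel M a `` {w}) | a w. w \<in> km_worlds M \<and> a \<in> km_val M p w}) \<rparr>"

definition smodel_iso :: "('v, 'a, 'p) smodel \<Rightarrow> ('u, 'a, 'p) smodel \<Rightarrow> bool" where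
  "smodel_iso C D \<longleftrightarrow> (\<exists>g. bij_betw g (sm_verts C) (sm_verts D) \<and>
     (\<forall>X. X \<subseteq> sm_verts C \<longrightarrow> (X \<in> sm_faces C \<longleftrightarrow> g ` X \<in> sm_faces D)) \<and>
     (\<forall>v\<in>sm_verts C. sm_col D (g v) = sm_col C v) \<and>
     (\<forall>p. g ` sm_lab C p = sm_lab D p))"

definition kmodel_iso :: "('w, 'a, 'p) kmodel \<Rightarrow> ('u, 'a, 'p) kmodel \<Rightarrow> bool" where
  "kmodel_iso M N \<longleftrightarrow> (\<exists>f. bij_betw f (km_worlds M) (km_worlds N) \<and>
     (\<forall>w\<in>km_worlds M. km_dom N (f w) = km_dom M w) \<and>
     (\<forall>p. \<forall>w\<in>km_worlds M. km_val N p (f w) = km_val M p w) \<and>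
     (\<forall>a. \<forall>w\<in>km_worlds M. \<forall>v\<in>km_worlds M.
        (w, v) \<in> km_rel M a \<longleftrightarrow> (f w, f v) \<in> km_rel N a))"

end

theory Submission
  imports Defs
begin


lemma face_finite:
  fixes C :: "('v, 'a::finite, 'p) smodel"
  assumes "simplicial_model C" "X \<in> sm_faces C"
  shows "finite X"
  using assms finite_imageD[of "sm_col C" X] unfolding simplicial_model_def
  by (meson finite_subset subset_UNIV finite)

lemma face_in_facet:
  fixes C :: "('v, 'a::finite, 'p) smodel"
  assumes sm: "simplicial_model C" and X: "X \<in> sm_faces C"
  shows "\<exists>F\<in>facets C. X \<subseteq> F"
proof -
  have bnd: "card Y < Suc (card (UNIV :: 'a set))" if "Y \<in> sm_faces C" for Y
  proof -
    have "inj_on (sm_col C) Y" using sm that unfolding simplicial_model_def by blast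
    then have "card Y = card (sm_col C ` Y)" by (simp add: card_image)
    also have "\<dots> \<le> card (UNIV :: 'a set)" by (rule card_mono) auto
    finally show ?thesis by simp
  qed
  obtain F where F: "F \<in> sm_faces C \<and> X \<subseteq> F"
    and mx: "\<forall>Y. Y \<in> sm_faces C \<and> X \<subseteq> Y \<longrightarrow> card Y \<le> card F"
    using Lattices_Big.ex_has_greatest_nat[of "\<lambda>Y. Y \<in> sm_faces C \<and> X \<subseteq> Y" X card "Suc (card (UNIV :: 'a set))"]
      X bnd by blast
  have "F \<in> facets C"
    unfolding facets_def
  proof (safe)
    show "F \<in> sm_faces C" using F by blast
  next
    fix Y x assume Y: "Y \<in> sm_faces C" "F \<subseteq> Y" "x \<in> Y"
    have "finite Y" using face_finite[OF sm Y(1)] .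
    moreover have "card Y \<le> card F" using mx Y F by blast
    ultimately have "F = Y" using Y(2) by (intro card_seteq)
    then show "x \<in> F" using Y by simp
  qed
  then show ?thesis using F by blast
qed

lemma part1:
  fixes C :: "('v, 'a::finite, 'p) smodel"
  assumes sm: "simplicial_model C"
  shows "smodel_iso C (SC (LEM C))"
proof -
  let ?V = "sm_verts C"
  let ?chi = "sm_col C"
  let ?Fs = "facets C"
  let ?K = "km_rel (LEM C)"
  define g where "g v = (?chi v, {G \<in> ?Fs. v \<in> G})" for v
  have Kdef: "?K a = {(F, G). F \<in> ?Fs \<and> G \<in> ?Fs \<and> a \<in> ?chi ` (F \<inter> G)}" for a
    by (simp add: LEM_def)
  have facF: "F \<in> sm_faces C" if "F \<in> ?Fs" for F using that unfolding facets_def by blast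
  have injF: "inj_on ?chi F" if "F \<in> ?Fs" for F using sm facF[OF that] unfolding simplicial_model_def by blast
  have PV: "sm_faces C \<subseteq> Pow ?V" using sm by (simp add: simplicial_model_def)
  have FV: "F \<subseteq> ?V" if "F \<in> ?Fs" for F using PV facF[OF that] by blast
  have img: "?K (?chi v) `` {F} = {G \<in> ?Fs. v \<in> G}" if F: "F \<in> ?Fs" "v \<in> F" for F v
  proof -
    have "G \<in> ?Fs \<Longrightarrow> ?chi v \<in> ?chi ` (F \<inter> G) \<Longrightarrow> v \<in> G" for G
      using injF[OF F(1)] F(2) by (auto dest: inj_onD)
    then show ?thesis using F by (auto simp: Kdef)
  qed
  have gF: "g v = (?chi v, ?K (?chi v) `` {F})" if "F \<in> ?Fs" "v \<in> F" for F v
    using img[OF that] by (simp add: g_def)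
  have exF: "\<exists>F\<in>?Fs. v \<in> F" if "v \<in> ?V" for v
  proof -
    have "{v} \<in> sm_faces C" using sm that unfolding simplicial_model_def by blast
    then show ?thesis using face_in_facet[OF sm] by blast
  qed
  have verts: "sm_verts (SC (LEM C)) = g ` ?V"
  proof
    show "sm_verts (SC (LEM C)) \<subseteq> g ` ?V"
    proof
      fix x assume "x \<in> sm_verts (SC (LEM C))"
      then obtain F a where x: "x = (a, ?K a `` {F})" "F \<in> ?Fs" "a \<in> ?chi ` F"
        by (auto simp: SC_def LEM_def)
      then obtain v where v: "v \<in> F" "a = ?chi v" by blast
      then have "x = g v" using x gF[OF x(2) v(1)] by simp
      moreover have "v \<in> ?V" using FV[OF x(2)] v(1) by blast
      ultimately show "x \<in> g ` ?V" by blast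
    qed
  next
    show "g ` ?V \<subseteq> sm_verts (SC (LEM C))"
    proof
      fix x assume "x \<in> g ` ?V"
      then obtain v where v: "v \<in> ?V" "x = g v" by blast
      then obtain F where F: "F \<in> ?Fs" "v \<in> F" using exF by blast
      show "x \<in> sm_verts (SC (LEM C))"
        using gF[OF F] v F by (auto simp: SC_def LEM_def)
    qed
  qed
  have inj: "inj_on g ?V"
  proof (rule inj_onI)
    fix v w assume vw: "v \<in> ?V" "w \<in> ?V" "g v = g w"
    obtain F where F: "F \<in> ?Fs" "v \<in> F" using exF vw by blast
    have "w \<in> F" using vw(3) F by (auto simp: g_def)
    moreover have "?chi v = ?chi w" using vw(3) by (simp add: g_def)
    ultimately show "v = w" using injF[OF F(1)] F by (auto dest: inj_onD)
  qed
  have Fw: "Fw (LEM C) F = g ` F" if "F \<in> ?Fs" for F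
    using gF[OF that] by (auto simp: Fw_def LEM_def)
  have faces: "sm_faces (SC (LEM C)) = {X. X \<noteq> {} \<and> (\<exists>F\<in>?Fs. X \<subseteq> g ` F)}"
    using Fw by (auto simp: SC_def LEM_def)
  have face_iff: "X \<in> sm_faces C \<longleftrightarrow> g ` X \<in> sm_faces (SC (LEM C))" if X: "X \<subseteq> ?V" for X
  proof
    assume "X \<in> sm_faces C"
    moreover then have "X \<noteq> {}" using sm unfolding simplicial_model_def by blast
    moreover obtain F where "F \<in> ?Fs" "X \<subseteq> F" using face_in_facet[OF sm] \<open>X \<in> sm_faces C\<close> by blast
    ultimately show "g ` X \<in> sm_faces (SC (LEM C))"
      unfolding faces by blast
  next
    assume "g ` X \<in> sm_faces (SC (LEM C))"
    then obtain F where F: "F \<in> ?Fs" "g ` X \<subseteq> g ` F" "X \<noteq> {}" unfolding faces by blast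
    have "X \<subseteq> F"
    proof
      fix x assume x: "x \<in> X"
      then have "g x \<in> g ` F" using F(2) by blast
      then show "x \<in> F" using inj_on_image_mem_iff[OF inj] X FV[OF F(1)] x by blast
    qed
    then show "X \<in> sm_faces C" using sm facF[OF F(1)] F(3) unfolding simplicial_model_def by blast
  qed
  have lab: "g ` sm_lab C p = sm_lab (SC (LEM C)) p" for p
  proof
    show "g ` sm_lab C p \<subseteq> sm_lab (SC (LEM C)) p"
    proof
      fix x assume "x \<in> g ` sm_lab C p"
      then obtain v where v: "v \<in> sm_lab C p" "x = g v" by blast
      then have "v \<in> ?V" using sm unfolding simplicial_model_def by blast
      then obtain F where F: "F \<in> ?Fs" "v \<in> F" using exF by blast
      show "x \<in> sm_lab (SC (LEM C)) p"
        using gF[OF F] v F by (auto simp: SC_def LEM_def)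
    qed
  next
    show "sm_lab (SC (LEM C)) p \<subseteq> g ` sm_lab C p"
    proof
      fix x assume "x \<in> sm_lab (SC (LEM C)) p"
      then obtain F a where x: "x = (a, ?K a `` {F})" "F \<in> ?Fs" "a \<in> ?chi ` (F \<inter> sm_lab C p)"
        by (auto simp: SC_def LEM_def)
      then obtain v where v: "v \<in> F" "v \<in> sm_lab C p" "a = ?chi v" by blast
      then have "x = g v" using x gF[OF x(2) v(1)] by simp
      then show "x \<in> g ` sm_lab C p" using v(2) by blast
    qed
  qed
  show ?thesis unfolding smodel_iso_def
    apply (rule exI[of _ g])
    using inj verts face_iff lab by (auto simp: bij_betw_def g_def SC_def)
qed



lemma le_basic:
  assumes le: "local_epistemic M"
  shows le_rel_dom: "\<And>w v a. (w, v) \<in> km_rel M a \<Longrightarrow> a \<in> km_dom M w \<and> a \<in> km_dom M v \<and> w \<in> km_worlds M \<and> v \<in> km_worlds M"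
    and le_refl: "\<And>w a. w \<in> km_worlds M \<Longrightarrow> a \<in> km_dom M w \<Longrightarrow> (w, w) \<in> km_rel M a"
    and le_sym: "\<And>w v a. (w, v) \<in> km_rel M a \<Longrightarrow> (v, w) \<in> km_rel M a"
    and le_trans: "\<And>w v u a. (w, v) \<in> km_rel M a \<Longrightarrow> (v, u) \<in> km_rel M a \<Longrightarrow> (w, u) \<in> km_rel M a"
    and le_val: "\<And>w v a p. (w, v) \<in> km_rel M a \<Longrightarrow> a \<in> km_val M p w \<Longrightarrow> a \<in> km_val M p v"
    and le_dcls: "\<And>w v. w \<in> km_worlds M \<Longrightarrow> v \<in> dcls M w \<Longrightarrow> km_dom M v \<subseteq> km_dom M w"
    and le_nonempty: "\<And>w. w \<in> km_worlds M \<Longrightarrow> km_dom M w \<noteq> {}"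
    and le_valdom: "\<And>w p. w \<in> km_worlds M \<Longrightarrow> km_val M p w \<subseteq> km_dom M w"
proof -
  have km: "kripke_model M" using le unfolding local_epistemic_def by blast
  have eqv: "equiv {w \<in> km_worlds M. a \<in> km_dom M w} (km_rel M a \<inter> {w \<in> km_worlds M. a \<in> km_dom M w} \<times> {w \<in> km_worlds M. a \<in> km_dom M w})" for a
    using le unfolding local_epistemic_def Let_def by blast
  have dom_mono: "(w, v) \<in> km_rel M a \<Longrightarrow> a \<in> km_dom M w \<Longrightarrow> a \<in> km_dom M v" for w v a
    using le unfolding local_epistemic_def by blast
  show rd: "a \<in> km_dom M w \<and> a \<in> km_dom M v \<and> w \<in> km_worlds M \<and> v \<in> km_worlds M"
    if "(w, v) \<in> km_rel M a" for w v a
  proof -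
    have W: "w \<in> km_worlds M" "v \<in> km_worlds M" using km that unfolding kripke_model_def by blast+
    have "a \<in> km_dom M w"
    proof (rule ccontr)
      assume "a \<notin> km_dom M w"
      then have "km_rel M a `` {w} = {}" using km W unfolding kripke_model_def by blast
      then show False using that by blast
    qed
    then show ?thesis using dom_mono that W by blast
  qed
  show "(w, w) \<in> km_rel M a" if "w \<in> km_worlds M" "a \<in> km_dom M w" for w a
    using eqv[of a] that unfolding equiv_def refl_on_def by blast
  show "(v, w) \<in> km_rel M a" if "(w, v) \<in> km_rel M a" for w v a
    using eqv[of a] that rd[OF that] unfolding equiv_def sym_def by blast
  show "(w, u) \<in> km_rel M a" if "(w, v) \<in> km_rel M a" "(v, u) \<in> km_rel M a" for w v u a
  proof -
    have "(w, v) \<in> km_rel M a \<inter> {w \<in> km_worlds M. a \<in> km_dom M w} \<times> {w \<in> km_worlds M. a \<in> km_dom M w}"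
      "(v, u) \<in> km_rel M a \<inter> {w \<in> km_worlds M. a \<in> km_dom M w} \<times> {w \<in> km_worlds M. a \<in> km_dom M w}"
      using that rd by blast+
    then show ?thesis using eqv[of a] unfolding equiv_def trans_def by blast
  qed
  show "\<And>w v a p. (w, v) \<in> km_rel M a \<Longrightarrow> a \<in> km_val M p w \<Longrightarrow> a \<in> km_val M p v"
    using le unfolding local_epistemic_def by blast
  show "\<And>w v. w \<in> km_worlds M \<Longrightarrow> v \<in> dcls M w \<Longrightarrow> km_dom M v \<subseteq> km_dom M w"
    using le unfolding local_epistemic_def by blast
  show "\<And>w. w \<in> km_worlds M \<Longrightarrow> km_dom M w \<noteq> {}"
    using km unfolding kripke_model_def by blast
  show "\<And>w p. w \<in> km_worlds M \<Longrightarrow> km_val M p w \<subseteq> km_dom M w"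
    using km unfolding kripke_model_def by blast
qed

lemma rel_iff:
  assumes le: "local_epistemic M" and w: "w \<in> km_worlds M"
  shows "(w, v) \<in> km_rel M a \<longleftrightarrow>
    a \<in> km_dom M w \<and> a \<in> km_dom M v \<and> v \<in> km_worlds M \<and> km_rel M a `` {w} = km_rel M a `` {v}"
proof
  assume r: "(w, v) \<in> km_rel M a"
  have "km_rel M a `` {w} = km_rel M a `` {v}"
    using le_sym[OF le] le_trans[OF le] r by blast
  then show "a \<in> km_dom M w \<and> a \<in> km_dom M v \<and> v \<in> km_worlds M \<and> km_rel M a `` {w} = km_rel M a `` {v}"
    using le_rel_dom[OF le r] by blast
next
  assume h: "a \<in> km_dom M w \<and> a \<in> km_dom M v \<and> v \<in> km_worlds M \<and> km_rel M a `` {w} = km_rel M a `` {v}"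
  then have "v \<in> km_rel M a `` {v}" using le_refl[OF le] by blast
  then show "(w, v) \<in> km_rel M a" using h by blast
qed

lemma Fw_dom: "fst ` Fw M w = km_dom M w"
  unfolding Fw_def by (auto simp: image_iff)

lemma Fw_mem: "(a, S) \<in> Fw M w \<longleftrightarrow> a \<in> km_dom M w \<and> S = km_rel M a `` {w}"
  unfolding Fw_def by blast

lemma dcls_Fw:
  assumes le: "local_epistemic M" and w: "w \<in> km_worlds M" and v: "v \<in> km_worlds M"
  shows "dcls M w = dcls M v \<longleftrightarrow> Fw M w = Fw M v"
proof
  assume eq: "dcls M w = dcls M v"
  have "w \<in> dcls M w" "v \<in> dcls M v" unfolding dcls_def using le_refl[OF le] w v by blast+
  then have wv: "w \<in> dcls M v" and vw: "v \<in> dcls M w" using eq by auto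
  have D: "km_dom M w = km_dom M v" using le_dcls[OF le w vw] le_dcls[OF le v wv] by blast
  have "km_rel M a `` {w} = km_rel M a `` {v}" if "a \<in> km_dom M w" for a
  proof -
    have "(w, v) \<in> km_rel M a" using vw that unfolding dcls_def by blast
    then show ?thesis using rel_iff[OF le w] by blast
  qed
  then show "Fw M w = Fw M v" using D unfolding Fw_def by auto
next
  assume eq: "Fw M w = Fw M v"
  have D: "km_dom M w = km_dom M v" using Fw_dom[of M w] Fw_dom[of M v] eq by simp
  have "km_rel M a `` {w} = km_rel M a `` {v}" if "a \<in> km_dom M w" for a
    using eq Fw_mem[of a "km_rel M a `` {w}" M w] Fw_mem[of a "km_rel M a `` {w}" M v] that by auto
  then show "dcls M w = dcls M v" using D unfolding dcls_def by auto
qed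

lemma Fw_sub:
  assumes le: "local_epistemic M" and w: "w \<in> km_worlds M" and v: "v \<in> km_worlds M"
    and sub: "Fw M w \<subseteq> Fw M v"
  shows "Fw M w = Fw M v"
proof -
  have D1: "km_dom M w \<subseteq> km_dom M v" using Fw_dom[of M w] Fw_dom[of M v] sub by blast
  have R: "km_rel M a `` {w} = km_rel M a `` {v}" if "a \<in> km_dom M w" for a
    using sub Fw_mem[of a "km_rel M a `` {w}" M w] Fw_mem[of a "km_rel M a `` {w}" M v] that by auto
  have "v \<in> dcls M w"
    unfolding dcls_def
  proof
    fix a assume a: "a \<in> km_dom M w"
    have "(v, v) \<in> km_rel M a" using le_refl[OF le v] D1 a by blast
    then show "v \<in> km_rel M a `` {w}" using R[OF a] by blast
  qed
  then have "km_dom M v \<subseteq> km_dom M w" using le_dcls[OF le w] by blast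
  then have "km_dom M w = km_dom M v" using D1 by blast
  then show ?thesis using R unfolding Fw_def by auto
qed

lemma SC_faces: "sm_faces (SC M) = {X. X \<noteq> {} \<and> (\<exists>w\<in>km_worlds M. X \<subseteq> Fw M w)}"
  by (simp add: SC_def)

lemma facets_SC:
  assumes le: "local_epistemic M"
  shows "facets (SC M) = Fw M ` km_worlds M"
proof
  show "facets (SC M) \<subseteq> Fw M ` km_worlds M"
  proof
    fix X assume X: "X \<in> facets (SC M)"
    then obtain w where w: "w \<in> km_worlds M" "X \<subseteq> Fw M w" unfolding facets_def SC_faces by blast
    have "Fw M w \<noteq> {}" using le_nonempty[OF le w(1)] Fw_dom[of M w] by auto
    then have "Fw M w \<in> sm_faces (SC M)" unfolding SC_faces using w by blast
    then have "X = Fw M w" using X w unfolding facets_def by blast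
    then show "X \<in> Fw M ` km_worlds M" using w by blast
  qed
next
  show "Fw M ` km_worlds M \<subseteq> facets (SC M)"
  proof
    fix X assume "X \<in> Fw M ` km_worlds M"
    then obtain w where w: "w \<in> km_worlds M" "X = Fw M w" by blast
    have ne: "Fw M w \<noteq> {}" using le_nonempty[OF le w(1)] Fw_dom[of M w] by auto
    have "Fw M w = Y" if hY: "Y \<in> sm_faces (SC M)" "Fw M w \<subseteq> Y" for Y
    proof -
      obtain v where v: "v \<in> km_worlds M" "Y \<subseteq> Fw M v" using hY unfolding SC_faces by blast
      have "Fw M w = Fw M v" using Fw_sub[OF le w(1) v(1)] hY v by blast
      then show ?thesis using hY v by blast
    qed
    then show "X \<in> facets (SC M)" unfolding facets_def SC_faces using w ne by blast
  qed
qed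

lemma LEM_simps:
  "km_worlds (LEM C) = facets C"
  "km_dom (LEM C) F = sm_col C ` F"
  "(F, G) \<in> km_rel (LEM C) a \<longleftrightarrow> F \<in> facets C \<and> G \<in> facets C \<and> a \<in> sm_col C ` (F \<inter> G)"
  "km_val (LEM C) p F = sm_col C ` (F \<inter> sm_lab C p)"
  by (simp_all add: LEM_def)

lemma SC_col: "sm_col (SC M) = fst"
  by (simp add: SC_def)

lemma LEM_SC_dom: "km_dom (LEM (SC M)) (Fw M w) = km_dom M w"
  using Fw_dom[of M w] by (simp add: LEM_simps SC_col)

lemma LEM_SC_val:
  assumes le: "local_epistemic M" and w: "w \<in> km_worlds M"
  shows "km_val (LEM (SC M)) p (Fw M w) = km_val M p w"
proof -
  have lab: "sm_lab (SC M) p = {(a, km_rel M a `` {u}) | a u. u \<in> km_worlds M \<and> a \<in> km_val M p u}"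
    by (simp add: SC_def)
  have "km_val (LEM (SC M)) p (Fw M w) = fst ` (Fw M w \<inter> sm_lab (SC M) p)"
    by (simp only: LEM_simps SC_col)
  also have "\<dots> = km_val M p w"
  proof
    show "fst ` (Fw M w \<inter> sm_lab (SC M) p) \<subseteq> km_val M p w"
    proof
      fix a assume "a \<in> fst ` (Fw M w \<inter> sm_lab (SC M) p)"
      then obtain x where x: "x \<in> Fw M w \<inter> sm_lab (SC M) p" "a = fst x" by blast
      obtain S where "x = (a, S)" using x(2) by (cases x) simp
      then have aS: "(a, S) \<in> Fw M w" "(a, S) \<in> sm_lab (SC M) p" using x(1) by blast+
      then obtain u where u: "u \<in> km_worlds M" "a \<in> km_val M p u" "S = km_rel M a `` {u}"
        unfolding lab by blast
      have Sw: "S = km_rel M a `` {w}" "a \<in> km_dom M w" using aS(1) by (simp_all only: Fw_mem)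
      have "a \<in> km_dom M u" using le_valdom[OF le u(1)] u(2) by blast
      then have "u \<in> km_rel M a `` {u}" using le_refl[OF le u(1)] by blast
      then have "(w, u) \<in> km_rel M a" using u(3) Sw by blast
      then have "(u, w) \<in> km_rel M a" using le_sym[OF le] by blast
      then show "a \<in> km_val M p w" using le_val[OF le] u(2) by blast
    qed
  next
    show "km_val M p w \<subseteq> fst ` (Fw M w \<inter> sm_lab (SC M) p)"
    proof
      fix a assume a: "a \<in> km_val M p w"
      have "a \<in> km_dom M w" using le_valdom[OF le w] a by blast
      then have "(a, km_rel M a `` {w}) \<in> Fw M w" by (simp add: Fw_mem)
      moreover have "(a, km_rel M a `` {w}) \<in> sm_lab (SC M) p"
        unfolding lab using a w by blast
      ultimately have "(a, km_rel M a `` {w}) \<in> Fw M w \<inter> sm_lab (SC M) p" by blast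
      then show "a \<in> fst ` (Fw M w \<inter> sm_lab (SC M) p)" by (rule rev_image_eqI) simp
    qed
  qed
  finally show ?thesis .
qed

lemma LEM_SC_rel:
  assumes le: "local_epistemic M" and w: "w \<in> km_worlds M" and v: "v \<in> km_worlds M"
  shows "(Fw M w, Fw M v) \<in> km_rel (LEM (SC M)) a \<longleftrightarrow> (w, v) \<in> km_rel M a"
proof -
  have "(Fw M w, Fw M v) \<in> km_rel (LEM (SC M)) a \<longleftrightarrow> a \<in> fst ` (Fw M w \<inter> Fw M v)"
    using facets_SC[OF le] w v by (simp only: LEM_simps SC_col) blast
  also have "\<dots> \<longleftrightarrow> a \<in> km_dom M w \<and> a \<in> km_dom M v \<and> km_rel M a `` {w} = km_rel M a `` {v}"
  proof
    assume "a \<in> fst ` (Fw M w \<inter> Fw M v)"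
    then obtain x where x: "x \<in> Fw M w \<inter> Fw M v" "a = fst x" by blast
    obtain S where "x = (a, S)" using x(2) by (cases x) simp
    then have "(a, S) \<in> Fw M w" "(a, S) \<in> Fw M v" using x(1) by blast+
    then show "a \<in> km_dom M w \<and> a \<in> km_dom M v \<and> km_rel M a `` {w} = km_rel M a `` {v}"
      unfolding Fw_mem by blast
  next
    assume h: "a \<in> km_dom M w \<and> a \<in> km_dom M v \<and> km_rel M a `` {w} = km_rel M a `` {v}"
    then have "(a, km_rel M a `` {w}) \<in> Fw M w \<inter> Fw M v" unfolding Int_iff Fw_mem by blast
    then show "a \<in> fst ` (Fw M w \<inter> Fw M v)" by (rule rev_image_eqI) simp
  qed
  also have "\<dots> \<longleftrightarrow> (w, v) \<in> km_rel M a" using rel_iff[OF le w] v by blast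
  finally show ?thesis .
qed

lemma part3:
  assumes pr: "proper M"
  shows "kmodel_iso M (LEM (SC M))"
proof -
  have le: "local_epistemic M" using pr unfolding proper_def by blast
  have inj: "inj_on (Fw M) (km_worlds M)"
  proof (rule inj_onI)
    fix w v assume "w \<in> km_worlds M" "v \<in> km_worlds M" "Fw M w = Fw M v"
    then have "dcls M w = dcls M v" using dcls_Fw[OF le] by blast
    moreover have "dcls M w = {w}" "dcls M v = {v}"
      using pr \<open>w \<in> km_worlds M\<close> \<open>v \<in> km_worlds M\<close> unfolding proper_def by blast+
    ultimately show "w = v" by simp
  qed
  have "bij_betw (Fw M) (km_worlds M) (km_worlds (LEM (SC M)))"
    using inj facets_SC[OF le] by (simp add: bij_betw_def LEM_simps)
  moreover have "\<forall>w\<in>km_worlds M. km_dom (LEM (SC M)) (Fw M w) = km_dom M w"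
    by (simp add: LEM_SC_dom)
  moreover have "\<forall>p. \<forall>w\<in>km_worlds M. km_val (LEM (SC M)) p (Fw M w) = km_val M p w"
    using LEM_SC_val[OF le] by blast
  moreover have "\<forall>a. \<forall>w\<in>km_worlds M. \<forall>v\<in>km_worlds M.
        (w, v) \<in> km_rel M a \<longleftrightarrow> (Fw M w, Fw M v) \<in> km_rel (LEM (SC M)) a"
    using LEM_SC_rel[OF le] by blast
  ultimately show ?thesis unfolding kmodel_iso_def by blast
qed

lemma part2:
  assumes le: "local_epistemic M"
  shows "kmodel_iso (properize M) (LEM (SC M))"
proof -
  define rep where "rep X = (SOME w. w \<in> km_worlds M \<and> dcls M w = X)" for X
  define f where "f X = Fw M (rep X)" for X
  have rep: "rep (dcls M w) \<in> km_worlds M \<and> dcls M (rep (dcls M w)) = dcls M w" if "w \<in> km_worlds M" for w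
    unfolding rep_def by (rule someI_ex) (use that in blast)
  have fw: "f (dcls M w) = Fw M w" if w: "w \<in> km_worlds M" for w
    using rep[OF w] dcls_Fw[OF le _ w] unfolding f_def by blast
  have PW: "km_worlds (properize M) = dcls M ` km_worlds M" by (simp add: properize_def)
  have bij: "bij_betw f (km_worlds (properize M)) (km_worlds (LEM (SC M)))"
    unfolding bij_betw_def
  proof
    show "inj_on f (km_worlds (properize M))"
    proof (rule inj_onI)
      fix X Y assume "X \<in> km_worlds (properize M)" "Y \<in> km_worlds (properize M)" "f X = f Y"
      then obtain w v where "w \<in> km_worlds M" "v \<in> km_worlds M" "X = dcls M w" "Y = dcls M v" "Fw M w = Fw M v"
        unfolding PW using fw by auto
      then show "X = Y" using dcls_Fw[OF le] by blast
    qed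
    have "f ` km_worlds (properize M) = Fw M ` km_worlds M"
      unfolding PW image_image using fw by (simp cong: image_cong)
    then show "f ` km_worlds (properize M) = km_worlds (LEM (SC M))"
      using facets_SC[OF le] by (simp add: LEM_simps)
  qed
  have dom: "km_dom (LEM (SC M)) (f X) = km_dom (properize M) X" if hX: "X \<in> km_worlds (properize M)" for X
  proof -
    obtain w where w: "w \<in> km_worlds M" "X = dcls M w" using hX PW by blast
    have "Fw M (rep X) = Fw M w" using rep[OF w(1)] dcls_Fw[OF le _ w(1)] w by blast
    then have "km_dom M (rep X) = km_dom M w" using Fw_dom[of M "rep X"] Fw_dom[of M w] by simp
    then show ?thesis using fw[OF w(1)] w LEM_SC_dom[of M w] by (simp add: properize_def rep_def)
  qed
  have val: "km_val (LEM (SC M)) p (f X) = km_val (properize M) p X" if hX: "X \<in> km_worlds (properize M)" for X p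
  proof -
    obtain w where w: "w \<in> km_worlds M" "X = dcls M w" using hX PW by blast
    have r: "rep X \<in> km_worlds M" "Fw M (rep X) = Fw M w" using rep[OF w(1)] dcls_Fw[OF le _ w(1)] w by blast+
    have "km_val M p (rep X) = km_val M p w"
      using LEM_SC_val[OF le r(1), of p] LEM_SC_val[OF le w(1), of p] r(2) by simp
    then show ?thesis using fw[OF w(1)] w LEM_SC_val[OF le w(1), of p] by (simp add: properize_def rep_def)
  qed
  have rel: "(X, Y) \<in> km_rel (properize M) a \<longleftrightarrow> (f X, f Y) \<in> km_rel (LEM (SC M)) a"
    if hX: "X \<in> km_worlds (properize M)" and hY: "Y \<in> km_worlds (properize M)" for X Y a
  proof -
    obtain w where w: "w \<in> km_worlds M" "X = dcls M w" using hX PW by blast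
    obtain v where v: "v \<in> km_worlds M" "Y = dcls M v" using hY PW by blast
    have "(X, Y) \<in> km_rel (properize M) a \<longleftrightarrow> (w, v) \<in> km_rel M a"
    proof
      assume "(X, Y) \<in> km_rel (properize M) a"
      then obtain w' v' where h: "X = dcls M w'" "Y = dcls M v'" "(w', v') \<in> km_rel M a"
        by (auto simp: properize_def)
      have W': "w' \<in> km_worlds M" "v' \<in> km_worlds M" using le_rel_dom[OF le h(3)] by blast+
      have "Fw M w' = Fw M w" "Fw M v' = Fw M v" using dcls_Fw[OF le] W' w v h by blast+
      then show "(w, v) \<in> km_rel M a"
        using LEM_SC_rel[OF le W'] LEM_SC_rel[OF le w(1) v(1)] h(3) by simp
    next
      assume "(w, v) \<in> km_rel M a"
      then show "(X, Y) \<in> km_rel (properize M) a" using w v by (auto simp: properize_def)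
    qed
    also have "\<dots> \<longleftrightarrow> (f X, f Y) \<in> km_rel (LEM (SC M)) a"
      using LEM_SC_rel[OF le w(1) v(1)] fw w v by simp
    finally show ?thesis .
  qed
  have "\<forall>w\<in>km_worlds (properize M). km_dom (LEM (SC M)) (f w) = km_dom (properize M) w"
    using dom by blast
  moreover have "\<forall>p. \<forall>w\<in>km_worlds (properize M). km_val (LEM (SC M)) p (f w) = km_val (properize M) p w"
    using val by blast
  moreover have "\<forall>a. \<forall>w\<in>km_worlds (properize M). \<forall>v\<in>km_worlds (properize M).
        (w, v) \<in> km_rel (properize M) a \<longleftrightarrow> (f w, f v) \<in> km_rel (LEM (SC M)) a"
    using rel by blast
  ultimately show ?thesis unfolding kmodel_iso_def using bij by blast
qed


theorem proposition3:
  shows "(\<forall>C :: ('v, 'a::finite, 'p::countable) smodel.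
            simplicial_model C \<longrightarrow> smodel_iso C (SC (LEM C))) \<and>
         (\<forall>M :: ('w, 'a, 'p) kmodel.
            local_epistemic M \<longrightarrow> kmodel_iso (properize M) (LEM (SC M))) \<and>
         (\<forall>M :: ('w, 'a, 'p) kmodel.
            proper M \<longrightarrow> kmodel_iso M (LEM (SC M)))"
  using part1 part2 part3 by blast

end
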